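(* Let $\mathcal S\subseteq\mathbb{R}^3$ be the subset generated by a pair of distinct lines in the plane. (1) If $\mathcal S$ is an HR-cone but not a unit cone, then $\mathcal S$ has a unique pair of generating lines; writing $\mathcal S=(A,{\bf a})$, these lines are the zero set (degenerate hyperbola) $\{{\bf x}\in\mathbb{R}^2: ({\bf x}-{\bf a})^T(A-I)({\bf x}-{\bf a})=0\}$. (2) $\mathcal S$ is a unit cone if and only if the generating lines for $\mathcal S$ are orthogonal, which holds if and only if the cone matrix of $\mathcal S$ is $I$. In this case, the lines in every pair of generating lines for $\mathcal S$ cross at the same point, and every pair of orthogonal lines crossing at this point generates $\mathcal S$.
   Context: For distinct lines $L_1,L_2$ in the plane, the subset of $\mathbb{R}^3$ generated by them is the set of all points $(x,y,\pm z)$ such that $2z$ is the length of a line segment with one endpoint on $L_1$, the other on $L_2$, and midpoint $(x,y)$; $L_1,L_2$ are then called a pair of generating lines for this set. For a symmetric positive definite $2\times 2$ matrix $A$ and ${\bf a}\in\mathbb{R}^2$, the elliptical cone $(A,{\bf a})$ is $\{(x,y,z)\in\mathbb{R}^3: z^2=({\bf x}-{\bf a})^TA({\bf x}-{\bf a}),\ {\bf x}=(x,y)^T\}$, with cone matrix $A$ (uniquely determined by the set). It is an HR-cone if $\det A=1$, and a unit cone if $A=I$, the $2\times2$ identity matrix. *)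

theory Defs
  imports "HOL-Analysis.Analysis"
begin

definition line_through :: "real^2 \<Rightarrow> real^2 \<Rightarrow> (real^2) set" where
  "line_through p d = {p + t *\<^sub>R d | t. True}"

definition is_line :: "(real^2) set \<Rightarrow> bool" where
  "is_line L \<longleftrightarrow> (\<exists>p d. d \<noteq> 0 \<and> L = line_through p d)"

definition orthogonal_lines :: "(real^2) set \<Rightarrow> (real^2) set \<Rightarrow> bool" where
  "orthogonal_lines L1 L2 \<longleftrightarrow>
     (\<exists>p d q e. d \<noteq> 0 \<and> e \<noteq> 0 \<and> L1 = line_through p d \<and> L2 = line_through q e \<and> d \<bullet> e = 0)"

definition generated_set :: "(real^2) set \<Rightarrow> (real^2) set \<Rightarrow> ((real^2) \<times> real) set" where
  "generated_set L1 L2 =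
     {(m, w) | m w. \<exists>P\<in>L1. \<exists>Q\<in>L2. m = (1/2) *\<^sub>R (P + Q) \<and> 2 * \<bar>w\<bar> = dist P Q}"

definition generating_pair :: "((real^2) \<times> real) set \<Rightarrow> (real^2) set \<Rightarrow> (real^2) set \<Rightarrow> bool" where
  "generating_pair S L1 L2 \<longleftrightarrow> is_line L1 \<and> is_line L2 \<and> L1 \<noteq> L2 \<and> generated_set L1 L2 = S"

definition sym_pos_def :: "real^2^2 \<Rightarrow> bool" where
  "sym_pos_def A \<longleftrightarrow> transpose A = A \<and> (\<forall>x. x \<noteq> 0 \<longrightarrow> x \<bullet> (A *v x) > 0)"

definition elliptical_cone :: "real^2^2 \<Rightarrow> real^2 \<Rightarrow> ((real^2) \<times> real) set" where
  "elliptical_cone A a = {(x, z) | x z. z\<^sup>2 = (x - a) \<bullet> (A *v (x - a))}"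

definition is_elliptical_cone :: "((real^2) \<times> real) set \<Rightarrow> bool" where
  "is_elliptical_cone S \<longleftrightarrow> (\<exists>A a. sym_pos_def A \<and> S = elliptical_cone A a)"

definition is_HR_cone :: "((real^2) \<times> real) set \<Rightarrow> bool" where
  "is_HR_cone S \<longleftrightarrow> (\<exists>A a. sym_pos_def A \<and> det A = 1 \<and> S = elliptical_cone A a)"

definition is_unit_cone :: "((real^2) \<times> real) set \<Rightarrow> bool" where
  "is_unit_cone S \<longleftrightarrow> (\<exists>a. S = elliptical_cone (mat 1) a)"

end

theory Submission
  imports Defs
begin


definition cross2 :: "real^2 \<Rightarrow> real^2 \<Rightarrow> real" where
  "cross2 u v = u$1 * v$2 - u$2 * v$1"

definition rf :: "real^2 \<Rightarrow> real^2 \<Rightarrow> real^2 \<Rightarrow> real^2" where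
  "rf d e v = (1 / cross2 d e) *\<^sub>R (cross2 v e *\<^sub>R d - cross2 d v *\<^sub>R e)"

definition Rm :: "real^2 \<Rightarrow> real^2 \<Rightarrow> real^2^2" where
  "Rm d e = matrix (rf d e)"

definition Am :: "real^2 \<Rightarrow> real^2 \<Rightarrow> real^2^2" where
  "Am d e = transpose (Rm d e) ** Rm d e"

lemma cross2_add1: "cross2 (u + v) w = cross2 u w + cross2 v w"
  and cross2_add2: "cross2 w (u + v) = cross2 w u + cross2 w v"
  and cross2_scale1: "cross2 (c *\<^sub>R u) w = c * cross2 u w"
  and cross2_scale2: "cross2 w (c *\<^sub>R u) = c * cross2 w u"
  and cross2_self: "cross2 u u = 0"
  and cross2_diff1: "cross2 (u - v) w = cross2 u w - cross2 v w"
  and cross2_diff2: "cross2 w (u - v) = cross2 w u - cross2 w v"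
  by (auto simp: cross2_def algebra_simps)

lemma linear_rf: "linear (rf d e)"
  by (rule linearI) (auto simp: rf_def cross2_add1 cross2_add2 cross2_scale1 cross2_scale2 algebra_simps)

lemma Rm_works: "Rm d e *v v = rf d e v"
  unfolding Rm_def using matrix_vector_mul(2)[OF linear_rf] by metis

lemma decomp:
  assumes "cross2 d e \<noteq> 0"
  shows "v = (cross2 v e / cross2 d e) *\<^sub>R d + (cross2 d v / cross2 d e) *\<^sub>R e"
proof -
  have "cross2 d e *\<^sub>R v = cross2 v e *\<^sub>R d + cross2 d v *\<^sub>R e"
    by (simp add: vec_eq_iff forall_2 cross2_def algebra_simps)
  hence "(1 / cross2 d e) *\<^sub>R (cross2 d e *\<^sub>R v) = (1 / cross2 d e) *\<^sub>R (cross2 v e *\<^sub>R d + cross2 d v *\<^sub>R e)"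
    by simp
  thus ?thesis using assms by (simp add: scaleR_add_right divide_inverse mult.commute)
qed

lemma rf_lin:
  assumes "cross2 d e \<noteq> 0"
  shows "rf d e (a *\<^sub>R d + b *\<^sub>R e) = a *\<^sub>R d - b *\<^sub>R e"
  using assms by (simp add: rf_def cross2_add1 cross2_add2 cross2_scale1 cross2_scale2 cross2_self)
     (simp add: scaleR_diff_right)

lemma rf_rf:
  assumes "cross2 d e \<noteq> 0"
  shows "rf d e (rf d e v) = v"
proof -
  define a b where "a = cross2 v e / cross2 d e" and "b = cross2 d v / cross2 d e"
  have v: "v = a *\<^sub>R d + b *\<^sub>R e" using decomp[OF assms] a_def b_def by blast
  have "rf d e v = a *\<^sub>R d + (-b) *\<^sub>R e" using rf_lin[OF assms] v by simp
  moreover have "rf d e (a *\<^sub>R d + (-b) *\<^sub>R e) = a *\<^sub>R d - (-b) *\<^sub>R e" by (rule rf_lin[OF assms])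
  ultimately have "rf d e (rf d e v) = a *\<^sub>R d - (-b) *\<^sub>R e" by simp
  thus ?thesis using v by simp
qed

lemma Rm_sq: "cross2 d e \<noteq> 0 \<Longrightarrow> Rm d e ** Rm d e = mat 1"
  by (simp add: matrix_eq matrix_vector_mul_assoc[symmetric] Rm_works rf_rf)

lemma quad_Am: "v \<bullet> (Am d e *v v) = rf d e v \<bullet> rf d e v"
proof -
  have "Am d e *v v = (Rm d e *v v) v* Rm d e"
    by (simp add: Am_def matrix_vector_mul_assoc[symmetric])
  hence "v \<bullet> (Am d e *v v) = ((Rm d e *v v) v* Rm d e) \<bullet> v" by (simp add: inner_commute)
  also have "\<dots> = (Rm d e *v v) \<bullet> (Rm d e *v v)" by (rule dot_lmul_matrix)
  finally show ?thesis by (simp add: Rm_works)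
qed

lemma rf_zero: "rf d e 0 = 0" by (simp add: rf_def cross2_def)

lemma sym_Am: "cross2 d e \<noteq> 0 \<Longrightarrow> sym_pos_def (Am d e)"
  unfolding sym_pos_def_def
proof (intro conjI allI impI)
  show "transpose (Am d e) = Am d e" by (simp add: Am_def matrix_transpose_mul)
  fix x :: "real^2" assume D: "cross2 d e \<noteq> 0" and x: "x \<noteq> 0"
  have "rf d e x \<noteq> 0"
  proof
    assume "rf d e x = 0"
    hence "rf d e (rf d e x) = 0" by (simp add: rf_zero)
    thus False using rf_rf[OF D] x by simp
  qed
  thus "0 < x \<bullet> (Am d e *v x)" by (simp add: quad_Am)
qed

lemma det_Am: "cross2 d e \<noteq> 0 \<Longrightarrow> det (Am d e) = 1"
proof -
  assume D: "cross2 d e \<noteq> 0"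
  have "det (Rm d e) * det (Rm d e) = 1" using Rm_sq[OF D] det_mul[of "Rm d e" "Rm d e"] by simp
  thus ?thesis by (simp add: Am_def det_mul)
qed

lemma quad_expand: "(v::real^2) \<bullet> (A *v v) = A$1$1 * v$1 * v$1 + (A$1$2 + A$2$1) * v$1 * v$2 + A$2$2 * v$2 * v$2"
  by (simp add: inner_vec_def sum_2 matrix_vector_mult_def algebra_simps)

lemma quad_eq_imp:
  fixes A B :: "real^2^2"
  assumes "transpose A = A" "transpose B = B" "\<And>v. v \<bullet> (A *v v) = v \<bullet> (B *v v)"
  shows "A = B"
proof -
  have 1: "A$1$1 = B$1$1" using assms(3)[of "vector [1,0]"] unfolding quad_expand by simp
  have 2: "A$2$2 = B$2$2" using assms(3)[of "vector [0,1]"] unfolding quad_expand by simp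
  have 3: "A$1$2 + A$2$1 = B$1$2 + B$2$1" using assms(3)[of "vector [1,1]"] 1 2 unfolding quad_expand by simp
  have "transpose A $1$2 = A$2$1" "transpose B $1$2 = B$2$1" by (simp_all add: transpose_def)
  hence 4: "A$1$2 = A$2$1" "B$1$2 = B$2$1" using assms(1,2) by simp_all
  show ?thesis using 1 2 3 4 by (simp add: vec_eq_iff forall_2)
qed

lemma quad_diff: "(a *\<^sub>R d - b *\<^sub>R e) \<bullet> (a *\<^sub>R d - b *\<^sub>R e) - (a *\<^sub>R d + b *\<^sub>R e) \<bullet> (a *\<^sub>R d + b *\<^sub>R e) = -4*a*b*(d \<bullet> (e::real^2))"
  by (simp add: inner_add_left inner_add_right inner_diff_left inner_diff_right inner_commute algebra_simps)


lemma gen_nonpar: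
  assumes D: "cross2 d e \<noteq> 0"
  shows "generated_set (line_through c d) (line_through c e) = elliptical_cone (Am d e) c"
proof (rule set_eqI, rule iffI)
  fix y assume "y \<in> generated_set (line_through c d) (line_through c e)"
  then obtain m w t s where y: "y = (m, w)" and m: "m = (1/2) *\<^sub>R ((c + t *\<^sub>R d) + (c + s *\<^sub>R e))"
    and w: "2 * \<bar>w\<bar> = dist (c + t *\<^sub>R d) (c + s *\<^sub>R e)"
    unfolding generated_set_def line_through_def by blast
  have mc: "m - c = (t/2) *\<^sub>R d + (s/2) *\<^sub>R e" using m by (simp add: vec_eq_iff field_simps)
  have "rf d e (m - c) = (t/2) *\<^sub>R d - (s/2) *\<^sub>R e" using mc rf_lin[OF D] by simp
  also have "\<dots> = (1/2) *\<^sub>R ((c + t *\<^sub>R d) - (c + s *\<^sub>R e))" by (simp add: algebra_simps)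
  finally have "norm (rf d e (m - c)) = \<bar>w\<bar>" using w by (simp add: dist_norm)
  hence "w\<^sup>2 = (m - c) \<bullet> (Am d e *v (m - c))"
    by (simp add: quad_Am power2_norm_eq_inner[symmetric])
  thus "y \<in> elliptical_cone (Am d e) c" using y unfolding elliptical_cone_def by blast
next
  fix y assume "y \<in> elliptical_cone (Am d e) c"
  then obtain x z where y: "y = (x, z)" and z: "z\<^sup>2 = (x - c) \<bullet> (Am d e *v (x - c))"
    unfolding elliptical_cone_def by blast
  define a b where "a = cross2 (x - c) e / cross2 d e" and "b = cross2 d (x - c) / cross2 d e"
  have v: "x - c = a *\<^sub>R d + b *\<^sub>R e" using decomp[OF D] a_def b_def by blast
  have r: "rf d e (x - c) = a *\<^sub>R d - b *\<^sub>R e" using v rf_lin[OF D] by simp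
  have "(norm (rf d e (x - c)))\<^sup>2 = z\<^sup>2" using z by (simp add: quad_Am power2_norm_eq_inner)
  hence nz: "norm (rf d e (x - c)) = \<bar>z\<bar>" using power2_eq_iff_nonneg[of "norm (rf d e (x - c))" "\<bar>z\<bar>"] by simp
  define P Q where "P = c + (2*a) *\<^sub>R d" and "Q = c + (2*b) *\<^sub>R e"
  have "P \<in> line_through c d" "Q \<in> line_through c e" unfolding P_def Q_def line_through_def by blast+
  moreover have "x = (1/2) *\<^sub>R (P + Q)" using v unfolding P_def Q_def by (simp add: vec_eq_iff field_simps)
  moreover have "P - Q = 2 *\<^sub>R rf d e (x - c)" unfolding r P_def Q_def by (simp add: vec_eq_iff field_simps)
  hence "2 * \<bar>z\<bar> = dist P Q" using nz by (simp add: dist_norm)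
  ultimately show "y \<in> generated_set (line_through c d) (line_through c e)"
    using y unfolding generated_set_def by blast
qed

lemma Am_I_iff:
  assumes D: "cross2 d e \<noteq> 0"
  shows "Am d e = mat 1 \<longleftrightarrow> d \<bullet> e = 0"
proof
  assume A: "Am d e = mat 1"
  have "rf d e (1 *\<^sub>R d + 1 *\<^sub>R e) = 1 *\<^sub>R d - 1 *\<^sub>R e" by (rule rf_lin[OF D])
  hence "rf d e (d + e) = d - e" by simp
  moreover have "(d + e) \<bullet> (Am d e *v (d + e)) = (d + e) \<bullet> (d + e)" using A by simp
  ultimately have "(1 *\<^sub>R d - 1 *\<^sub>R e) \<bullet> (1 *\<^sub>R d - 1 *\<^sub>R e) - (1 *\<^sub>R d + 1 *\<^sub>R e) \<bullet> (1 *\<^sub>R d + 1 *\<^sub>R e) = 0"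
    by (simp add: quad_Am)
  thus "d \<bullet> e = 0" unfolding quad_diff by simp
next
  assume de: "d \<bullet> e = 0"
  show "Am d e = mat 1"
  proof (rule quad_eq_imp)
    show "transpose (Am d e) = Am d e" using sym_Am[OF D] unfolding sym_pos_def_def by blast
    show "transpose (mat 1 :: real^2^2) = mat 1" by (simp add: transpose_mat)
    fix v :: "real^2"
    define a b where "a = cross2 v e / cross2 d e" and "b = cross2 d v / cross2 d e"
    have v: "v = a *\<^sub>R d + b *\<^sub>R e" using decomp[OF D] a_def b_def by blast
    have r: "rf d e v = a *\<^sub>R d - b *\<^sub>R e" using v rf_lin[OF D] by simp
    have "rf d e v \<bullet> rf d e v - v \<bullet> v = 0" using quad_diff[of a d b e] de by (simp add: r v[symmetric])
    thus "v \<bullet> (Am d e *v v) = v \<bullet> (mat 1 *v v)" by (simp add: quad_Am)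
  qed
qed

lemma zero_set:
  assumes D: "cross2 d e \<noteq> 0" and de: "d \<bullet> e \<noteq> 0"
  shows "{x. (x - c) \<bullet> ((Am d e - mat 1) *v (x - c)) = 0} = line_through c d \<union> line_through c e"
proof -
  have key: "(x - c) \<bullet> ((Am d e - mat 1) *v (x - c)) = rf d e (x - c) \<bullet> rf d e (x - c) - (x - c) \<bullet> (x - c)" for x
    by (simp add: matrix_vector_mult_diff_rdistrib inner_diff_right quad_Am)
  show ?thesis
  proof (rule set_eqI)
    fix x
    define a b where "a = cross2 (x - c) e / cross2 d e" and "b = cross2 d (x - c) / cross2 d e"
    have v: "x - c = a *\<^sub>R d + b *\<^sub>R e" using decomp[OF D] a_def b_def by blast
    have r: "rf d e (x - c) = a *\<^sub>R d - b *\<^sub>R e" using v rf_lin[OF D] by simp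
    have val: "(x - c) \<bullet> ((Am d e - mat 1) *v (x - c)) = -4*a*b*(d \<bullet> e)"
      unfolding key r v[symmetric] using quad_diff[of a d b e] by (simp add: v[symmetric])
    have "x \<in> line_through c d \<longleftrightarrow> b = 0"
    proof
      assume "x \<in> line_through c d"
      then obtain t where "x = c + t *\<^sub>R d" unfolding line_through_def by blast
      hence "x - c = t *\<^sub>R d + 0 *\<^sub>R e" by simp
      hence "cross2 d (x - c) = 0" by (simp add: cross2_scale2 cross2_self)
      thus "b = 0" by (simp add: b_def)
    next
      assume "b = 0" hence "x = c + a *\<^sub>R d" using v by (simp add: algebra_simps)
      thus "x \<in> line_through c d" unfolding line_through_def by blast
    qed
    moreover have "x \<in> line_through c e \<longleftrightarrow> a = 0"
    proof
      assume "x \<in> line_through c e"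
      then obtain t where "x = c + t *\<^sub>R e" unfolding line_through_def by blast
      hence "x - c = t *\<^sub>R e" by simp
      hence "cross2 (x - c) e = 0" by (simp add: cross2_scale1 cross2_self)
      thus "a = 0" by (simp add: a_def)
    next
      assume "a = 0" hence "x = c + b *\<^sub>R e" using v by (simp add: algebra_simps)
      thus "x \<in> line_through c e" unfolding line_through_def by blast
    qed
    ultimately show "x \<in> {x. (x - c) \<bullet> ((Am d e - mat 1) *v (x - c)) = 0} \<longleftrightarrow> x \<in> line_through c d \<union> line_through c e"
      using val de by auto
  qed
qed

lemma spd_nonneg: "sym_pos_def A \<Longrightarrow> 0 \<le> v \<bullet> (A *v v)"
  unfolding sym_pos_def_def by (cases "v = 0") (auto intro: less_imp_le)

lemma cone_unique:
  assumes A: "sym_pos_def A" and B: "sym_pos_def B" and eq: "elliptical_cone A a = elliptical_cone B b"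
  shows "A = B \<and> a = b"
proof -
  have q: "(x - a) \<bullet> (A *v (x - a)) = (x - b) \<bullet> (B *v (x - b))" for x
  proof -
    let ?q = "(x - a) \<bullet> (A *v (x - a))"
    have "(sqrt ?q)\<^sup>2 = ?q" using spd_nonneg[OF A] by simp
    hence "(x, sqrt ?q) \<in> elliptical_cone A a" unfolding elliptical_cone_def by blast
    hence "(x, sqrt ?q) \<in> elliptical_cone B b" using eq by simp
    hence "(sqrt ?q)\<^sup>2 = (x - b) \<bullet> (B *v (x - b))" unfolding elliptical_cone_def by blast
    thus ?thesis using spd_nonneg[OF A] by simp
  qed
  have "(a - b) \<bullet> (B *v (a - b)) = 0" using q[of a] by simp
  hence ab: "a = b" using B unfolding sym_pos_def_def by (metis less_irrefl right_minus_eq)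
  have "A = B"
  proof (rule quad_eq_imp)
    show "transpose A = A" "transpose B = B" using A B unfolding sym_pos_def_def by blast+
    fix v show "v \<bullet> (A *v v) = v \<bullet> (B *v v)" using q[of "v + a"] ab by simp
  qed
  thus ?thesis using ab by simp
qed

lemma ell_all: "is_elliptical_cone S \<Longrightarrow> \<exists>z. (x, z) \<in> S"
proof -
  assume "is_elliptical_cone S"
  then obtain A a where A: "sym_pos_def A" and S: "S = elliptical_cone A a" unfolding is_elliptical_cone_def by blast
  have "(sqrt ((x - a) \<bullet> (A *v (x - a))))\<^sup>2 = (x - a) \<bullet> (A *v (x - a))" using spd_nonneg[OF A] by simp
  thus ?thesis unfolding S elliptical_cone_def by blast
qed

lemma par_not_ell:
  assumes D: "cross2 d e = 0" and d: "d \<noteq> 0"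
  shows "\<not> is_elliptical_cone (generated_set (line_through p d) (line_through q e))"
proof
  assume ell: "is_elliptical_cone (generated_set (line_through p d) (line_through q e))"
  define n :: "real^2" where "n = vector [- d$2, d$1]"
  from ell_all[OF ell, of "(1/2) *\<^sub>R (p + q) + n"] obtain z P Q where
    "P \<in> line_through p d" "Q \<in> line_through q e" and m: "(1/2) *\<^sub>R (p + q) + n = (1/2) *\<^sub>R (P + Q)"
    unfolding generated_set_def by blast
  then obtain t s where P: "P = p + t *\<^sub>R d" and Q: "Q = q + s *\<^sub>R e" unfolding line_through_def by blast
  have "n = (t/2) *\<^sub>R d + (s/2) *\<^sub>R e" unfolding vec_eq_iff
  proof
    fix i
    have h: "((1/2) *\<^sub>R (p + q) + n)$i = ((1/2) *\<^sub>R (P + Q))$i" using m by simp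
    have "n$i * 4 = s * (e$i * 2) + t * (d$i * 2)" using h unfolding P Q by (simp add: field_simps)
    thus "n$i = ((t/2) *\<^sub>R d + (s/2) *\<^sub>R e)$i" by simp
  qed
  hence "cross2 d n = (s/2) * cross2 d e" by (simp add: cross2_add2 cross2_scale2 cross2_self)
  hence "2 * (d$1 * d$1 + d$2 * d$2) = 0" using D by (simp add: n_def cross2_def del: sum_squares_eq_zero_iff)
  hence "d$1 * d$1 + d$2 * d$2 = 0" by (simp del: sum_squares_eq_zero_iff)
  hence "d$1 = 0 \<and> d$2 = 0" by simp
  thus False using d by (simp add: vec_eq_iff forall_2)
qed

lemma line_dir:
  assumes "line_through p d = line_through p' d'"
  shows "\<exists>k. d' = k *\<^sub>R d"
proof -
  have "p' \<in> line_through p' d'" "p' + d' \<in> line_through p' d'"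
    unfolding line_through_def by (auto intro: exI[of _ 0] exI[of _ 1])
  hence "p' \<in> line_through p d" "p' + d' \<in> line_through p d" using assms by simp_all
  then obtain a b where "p' = p + a *\<^sub>R d" "p' + d' = p + b *\<^sub>R d"
    unfolding line_through_def by blast
  hence "d' = (b - a) *\<^sub>R d" by (simp add: algebra_simps)
  thus ?thesis by blast
qed

lemma orth_iff:
  assumes d: "d \<noteq> 0" and e: "e \<noteq> 0"
  shows "orthogonal_lines (line_through p d) (line_through q e) \<longleftrightarrow> d \<bullet> e = 0"
proof
  assume "orthogonal_lines (line_through p d) (line_through q e)"
  then obtain p' d' q' e' where "d' \<noteq> 0" "e' \<noteq> 0" "line_through p d = line_through p' d'"
    "line_through q e = line_through q' e'" "d' \<bullet> e' = 0" unfolding orthogonal_lines_def by blast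
  moreover from this obtain k k' where "d' = k *\<^sub>R d" "e' = k' *\<^sub>R e" using line_dir by metis
  ultimately show "d \<bullet> e = 0" by auto
next
  assume "d \<bullet> e = 0" thus "orthogonal_lines (line_through p d) (line_through q e)"
    unfolding orthogonal_lines_def using d e by blast
qed

lemma perp_cross:
  assumes "(d::real^2) \<bullet> e = 0" "cross2 d e = 0"
  shows "d = 0 \<or> e = 0"
proof -
  have "(d \<bullet> e)\<^sup>2 + (cross2 d e)\<^sup>2 = (d$1 * d$1 + d$2 * d$2) * (e$1 * e$1 + e$2 * e$2)"
    by (simp add: inner_vec_def sum_2 cross2_def power2_eq_square algebra_simps)
  hence "(d$1 * d$1 + d$2 * d$2) * (e$1 * e$1 + e$2 * e$2) = 0" using assms by simp
  hence "(d$1 = 0 \<and> d$2 = 0) \<or> (e$1 = 0 \<and> e$2 = 0)" by simp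
  thus ?thesis by (auto simp: vec_eq_iff forall_2)
qed

lemma line_shift:
  assumes "x \<in> line_through p d"
  shows "line_through p d = line_through x d"
proof -
  obtain a where x: "x = p + a *\<^sub>R d" using assms unfolding line_through_def by blast
  show ?thesis unfolding line_through_def x
  proof (rule set_eqI, rule iffI)
    fix y assume "y \<in> {p + t *\<^sub>R d |t. True}"
    then obtain t where "y = p + t *\<^sub>R d" by blast
    hence "y = p + a *\<^sub>R d + (t - a) *\<^sub>R d" by (simp add: algebra_simps)
    thus "y \<in> {p + a *\<^sub>R d + t *\<^sub>R d |t. True}" by blast
  next
    fix y assume "y \<in> {p + a *\<^sub>R d + t *\<^sub>R d |t. True}"
    then obtain t where "y = p + a *\<^sub>R d + t *\<^sub>R d" by blast
    hence "y = p + (a + t) *\<^sub>R d" by (simp add: algebra_simps)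
    thus "y \<in> {p + t *\<^sub>R d |t. True}" by blast
  qed
qed

lemma inter_pt:
  assumes D: "cross2 d e \<noteq> 0"
  shows "\<exists>c. c \<in> line_through p d \<and> c \<in> line_through q e"
proof -
  define a b where "a = cross2 (q - p) e / cross2 d e" and "b = cross2 d (q - p) / cross2 d e"
  have v: "q - p = a *\<^sub>R d + b *\<^sub>R e" using decomp[OF D] a_def b_def by blast
  have "p + a *\<^sub>R d = q + (- b) *\<^sub>R e" using v by (simp add: algebra_simps)
  thus ?thesis unfolding line_through_def by blast
qed

lemma line_two:
  assumes d: "d \<noteq> 0" and x: "x \<in> line_through p d" and y: "y \<in> line_through p d" and xy: "x \<noteq> y"
  shows "line_through p d = line_through x (y - x)"
proof -
  obtain a b where xa: "x = p + a *\<^sub>R d" and yb: "y = p + b *\<^sub>R d" using x y unfolding line_through_def by blast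
  have ab: "b - a \<noteq> 0" using xy xa yb by auto
  have yx: "y - x = (b - a) *\<^sub>R d" using xa yb by (simp add: algebra_simps)
  show ?thesis
  proof (rule set_eqI, rule iffI)
    fix z assume "z \<in> line_through p d"
    then obtain t where z: "z = p + t *\<^sub>R d" unfolding line_through_def by blast
    have "((t - a) / (b - a)) *\<^sub>R (y - x) = (t - a) *\<^sub>R d" using ab unfolding yx by simp
    hence "z = x + ((t - a) / (b - a)) *\<^sub>R (y - x)" unfolding xa z by (simp add: algebra_simps)
    thus "z \<in> line_through x (y - x)" unfolding line_through_def by blast
  next
    fix z assume "z \<in> line_through x (y - x)"
    then obtain t where z: "z = x + t *\<^sub>R (y - x)" unfolding line_through_def by blast
    have "z = x + (t * (b - a)) *\<^sub>R d" unfolding z yx by simp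
    hence "z = p + (a + t * (b - a)) *\<^sub>R d" unfolding xa by (simp add: algebra_simps)
    thus "z \<in> line_through p d" unfolding line_through_def by blast
  qed
qed

lemma lines_eq:
  assumes "is_line L" "is_line M" "x \<in> L" "y \<in> L" "x \<in> M" "y \<in> M" "x \<noteq> y"
  shows "L = M"
proof -
  obtain p d where "d \<noteq> 0" "L = line_through p d" using assms(1) unfolding is_line_def by blast
  hence 1: "L = line_through x (y - x)" using line_two assms(3,4,7) by blast
  obtain q e where "e \<noteq> 0" "M = line_through q e" using assms(2) unfolding is_line_def by blast
  hence "M = line_through x (y - x)" using line_two assms(5,6,7) by blast
  thus ?thesis using 1 by simp
qed

lemma line_in_union:
  assumes L: "is_line L" and L1: "is_line L1" and L2: "is_line L2" and sub: "L \<subseteq> L1 \<union> L2"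
  shows "L = L1 \<or> L = L2"
proof -
  obtain p d where d: "d \<noteq> 0" and Ld: "L = line_through p d" using L unfolding is_line_def by blast
  have in3: "p \<in> L" "p + d \<in> L" "p + 2 *\<^sub>R d \<in> L"
    unfolding Ld line_through_def by (auto intro: exI[of _ 0] exI[of _ 1] exI[of _ 2])
  have ne: "p \<noteq> p + d" "p \<noteq> p + 2 *\<^sub>R d" using d by auto
  have "p + 1 *\<^sub>R d \<noteq> p + 2 *\<^sub>R d" using d by (simp only: add_left_cancel scaleR_cancel_right) simp
  hence ne3: "p + d \<noteq> p + 2 *\<^sub>R d" by simp
  have c1: "L = L1" if "x \<in> L" "y \<in> L" "x \<noteq> y" "x \<in> L1" "y \<in> L1" for x y
    using lines_eq[OF L L1 that(1,2,4,5,3)] .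
  have c2: "L = L2" if "x \<in> L" "y \<in> L" "x \<noteq> y" "x \<in> L2" "y \<in> L2" for x y
    using lines_eq[OF L L2 that(1,2,4,5,3)] .
  show ?thesis
  proof (cases "p \<in> L1")
    case True
    show ?thesis
    proof (cases "p + d \<in> L1")
      case True thus ?thesis using c1[OF in3(1,2) ne(1) \<open>p \<in> L1\<close>] by blast
    next
      case False
      hence p2: "p + d \<in> L2" using in3 sub by blast
      show ?thesis
      proof (cases "p + 2 *\<^sub>R d \<in> L1")
        case True thus ?thesis using c1[OF in3(1,3) ne(2) \<open>p \<in> L1\<close>] by blast
      next
        case False
        hence "p + 2 *\<^sub>R d \<in> L2" using in3 sub by blast
        thus ?thesis using c2[OF in3(2,3) ne3 p2] by blast
      qed
    qed
  next
    case False
    hence p1: "p \<in> L2" using in3 sub by blast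
    show ?thesis
    proof (cases "p + d \<in> L2")
      case True thus ?thesis using c2[OF in3(1,2) ne(1) p1] by blast
    next
      case False
      hence p2: "p + d \<in> L1" using in3 sub by blast
      show ?thesis
      proof (cases "p + 2 *\<^sub>R d \<in> L2")
        case True thus ?thesis using c2[OF in3(1,3) ne(2) p1] by blast
      next
        case False
        hence "p + 2 *\<^sub>R d \<in> L1" using in3 sub by blast
        thus ?thesis using c1[OF in3(2,3) ne3 p2] by blast
      qed
    qed
  qed
qed

lemma pair_eq:
  assumes "is_line M1" "is_line M2" "is_line L1" "is_line L2" "M1 \<union> M2 = L1 \<union> L2" "M1 \<noteq> M2" "L1 \<noteq> L2"
  shows "{M1, M2} = {L1, L2}"
proof -
  have "M1 = L1 \<or> M1 = L2" using line_in_union[OF assms(1,3,4)] assms(5) by blast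
  moreover have "M2 = L1 \<or> M2 = L2" using line_in_union[OF assms(2,3,4)] assms(5) by blast
  ultimately show ?thesis using assms(6) by auto
qed

lemma gp_cases:
  assumes "generating_pair S L1 L2"
  shows "(\<exists>c d e. d \<noteq> 0 \<and> e \<noteq> 0 \<and> cross2 d e \<noteq> 0 \<and> L1 = line_through c d \<and> L2 = line_through c e
            \<and> S = elliptical_cone (Am d e) c \<and> (orthogonal_lines L1 L2 \<longleftrightarrow> d \<bullet> e = 0))
         \<or> (\<not> is_elliptical_cone S \<and> \<not> orthogonal_lines L1 L2)"
proof -
  obtain p d where d: "d \<noteq> 0" and L1: "L1 = line_through p d"
    using assms unfolding generating_pair_def is_line_def by blast
  obtain q e where e: "e \<noteq> 0" and L2: "L2 = line_through q e"
    using assms unfolding generating_pair_def is_line_def by blast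
  have S: "S = generated_set L1 L2" using assms unfolding generating_pair_def by simp
  show ?thesis
  proof (cases "cross2 d e = 0")
    case True
    have "\<not> is_elliptical_cone S" using par_not_ell[OF True d] S L1 L2 by simp
    moreover have "\<not> orthogonal_lines L1 L2" using orth_iff[OF d e] perp_cross[of d e] True d e L1 L2 by blast
    ultimately show ?thesis by blast
  next
    case False
    obtain c where c: "c \<in> line_through p d" "c \<in> line_through q e" using inter_pt[OF False] by blast
    have L1c: "L1 = line_through c d" and L2c: "L2 = line_through c e" using line_shift c L1 L2 by blast+
    have "S = elliptical_cone (Am d e) c" using S L1c L2c gen_nonpar[OF False] by simp
    moreover have "orthogonal_lines L1 L2 \<longleftrightarrow> d \<bullet> e = 0" using orth_iff[OF d e] L1c L2c by simp
    ultimately show ?thesis using d e False L1c L2c by blast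
  qed
qed

lemma spd_I: "sym_pos_def (mat 1)"
  unfolding sym_pos_def_def by (simp add: transpose_mat)

lemma unit_ell: "is_unit_cone S \<Longrightarrow> is_elliptical_cone S"
  unfolding is_unit_cone_def is_elliptical_cone_def using spd_I by blast

lemma HR_ell: "is_HR_cone S \<Longrightarrow> is_elliptical_cone S"
  unfolding is_HR_cone_def is_elliptical_cone_def by blast

lemma line_mem: "c \<in> line_through c d"
  unfolding line_through_def by (auto intro: exI[of _ 0])

theorem theorem3p6:
  fixes S :: "((real^2) \<times> real) set" and L1 L2 :: "(real^2) set"
  assumes gen: "generating_pair S L1 L2"
  shows
    "(is_HR_cone S \<and> \<not> is_unit_cone S \<longrightarrow>
        (\<forall>M1 M2. generating_pair S M1 M2 \<longrightarrow> {M1, M2} = {L1, L2}) \<and>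
        (\<forall>A a. sym_pos_def A \<and> S = elliptical_cone A a \<longrightarrow>
           L1 \<union> L2 = {x. (x - a) \<bullet> ((A - mat 1) *v (x - a)) = 0}))
     \<and> (is_unit_cone S \<longleftrightarrow> orthogonal_lines L1 L2)
     \<and> (orthogonal_lines L1 L2 \<longleftrightarrow>
          (is_elliptical_cone S \<and>
           (\<forall>A a. sym_pos_def A \<and> S = elliptical_cone A a \<longrightarrow> A = mat 1)))
     \<and> (is_unit_cone S \<longrightarrow>
          (\<exists>p. (\<forall>M1 M2. generating_pair S M1 M2 \<longrightarrow> p \<in> M1 \<inter> M2) \<and>
               (\<forall>M1 M2. is_line M1 \<and> is_line M2 \<and> orthogonal_lines M1 M2 \<and> p \<in> M1 \<inter> M2
                   \<longrightarrow> generating_pair S M1 M2)))"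
proof -
  from gp_cases[OF gen] show ?thesis
  proof
    assume "\<not> is_elliptical_cone S \<and> \<not> orthogonal_lines L1 L2"
    thus ?thesis using unit_ell HR_ell by blast
  next
    assume "\<exists>c d e. d \<noteq> 0 \<and> e \<noteq> 0 \<and> cross2 d e \<noteq> 0 \<and> L1 = line_through c d \<and> L2 = line_through c e
            \<and> S = elliptical_cone (Am d e) c \<and> (orthogonal_lines L1 L2 \<longleftrightarrow> d \<bullet> e = 0)"
    then obtain c d e where d: "d \<noteq> 0" and e: "e \<noteq> 0" and D: "cross2 d e \<noteq> 0"
      and L1: "L1 = line_through c d" and L2: "L2 = line_through c e" and S: "S = elliptical_cone (Am d e) c"
      and orth: "orthogonal_lines L1 L2 \<longleftrightarrow> d \<bullet> e = 0" by blast
    have spdA: "sym_pos_def (Am d e)" using sym_Am[OF D] .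
    have ell: "is_elliptical_cone S" using spdA S unfolding is_elliptical_cone_def by blast
    have uniq: "A = Am d e \<and> a = c" if "sym_pos_def A" "S = elliptical_cone A a" for A a
      using cone_unique[OF that(1) spdA, of a c] that(2) S by simp
    have unit_iff: "is_unit_cone S \<longleftrightarrow> d \<bullet> e = 0"
    proof
      assume "is_unit_cone S"
      then obtain a where "S = elliptical_cone (mat 1) a" unfolding is_unit_cone_def by blast
      hence "Am d e = mat 1" using uniq[OF spd_I] by simp
      thus "d \<bullet> e = 0" using Am_I_iff[OF D] by simp
    next
      assume "d \<bullet> e = 0"
      hence "Am d e = mat 1" using Am_I_iff[OF D] by simp
      hence "S = elliptical_cone (mat 1) c" using S by simp
      thus "is_unit_cone S" unfolding is_unit_cone_def by blast
    qed
    have other: "\<exists>d' e'. d' \<noteq> 0 \<and> e' \<noteq> 0 \<and> cross2 d' e' \<noteq> 0 \<and> M1 = line_through c d' \<and> M2 = line_through c e'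
                    \<and> Am d' e' = Am d e" if M: "generating_pair S M1 M2" for M1 M2
    proof -
      from gp_cases[OF M] ell obtain c' d' e' where "d' \<noteq> 0" "e' \<noteq> 0" "cross2 d' e' \<noteq> 0"
        "M1 = line_through c' d'" "M2 = line_through c' e'" and S': "S = elliptical_cone (Am d' e') c'" by blast
      moreover have "Am d' e' = Am d e \<and> c' = c" using uniq[OF sym_Am S'] \<open>cross2 d' e' \<noteq> 0\<close> by blast
      ultimately show ?thesis by blast
    qed
    have P1: "is_HR_cone S \<and> \<not> is_unit_cone S \<longrightarrow>
        (\<forall>M1 M2. generating_pair S M1 M2 \<longrightarrow> {M1, M2} = {L1, L2}) \<and>
        (\<forall>A a. sym_pos_def A \<and> S = elliptical_cone A a \<longrightarrow>
           L1 \<union> L2 = {x. (x - a) \<bullet> ((A - mat 1) *v (x - a)) = 0})"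
    proof (rule impI)
      assume "is_HR_cone S \<and> \<not> is_unit_cone S"
      hence de: "d \<bullet> e \<noteq> 0" using unit_iff by blast
      have Z: "{x. (x - c) \<bullet> ((Am d e - mat 1) *v (x - c)) = 0} = L1 \<union> L2" using zero_set[OF D de] L1 L2 by simp
      have part1: "\<forall>M1 M2. generating_pair S M1 M2 \<longrightarrow> {M1, M2} = {L1, L2}"
      proof (intro allI impI)
        fix M1 M2
        assume M: "generating_pair S M1 M2"
        obtain d' e' where D': "cross2 d' e' \<noteq> 0" and M1: "M1 = line_through c d'" and M2: "M2 = line_through c e'"
          and A': "Am d' e' = Am d e" using other[OF M] by blast
        have "Am d' e' \<noteq> mat 1" using A' Am_I_iff[OF D] de by simp
        hence de': "d' \<bullet> e' \<noteq> 0" using Am_I_iff[OF D'] by simp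
        have "M1 \<union> M2 = {x. (x - c) \<bullet> ((Am d' e' - mat 1) *v (x - c)) = 0}" using zero_set[OF D' de', of c] M1 M2 by simp
        hence MU: "M1 \<union> M2 = L1 \<union> L2" using Z A' by simp
        have m: "is_line M1" "is_line M2" "M1 \<noteq> M2" using M unfolding generating_pair_def by simp_all
        have l: "is_line L1" "is_line L2" "L1 \<noteq> L2" using gen unfolding generating_pair_def by simp_all
        show "{M1, M2} = {L1, L2}" by (rule pair_eq[OF m(1,2) l(1,2) MU m(3) l(3)])
      qed
      have part2: "\<forall>A a. sym_pos_def A \<and> S = elliptical_cone A a \<longrightarrow>
           L1 \<union> L2 = {x. (x - a) \<bullet> ((A - mat 1) *v (x - a)) = 0}"
      proof (intro allI impI)
        fix A a
        assume "sym_pos_def A \<and> S = elliptical_cone A a"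
        hence "A = Am d e \<and> a = c" using uniq by blast
        thus "L1 \<union> L2 = {x. (x - a) \<bullet> ((A - mat 1) *v (x - a)) = 0}" using Z by simp
      qed
      show "(\<forall>M1 M2. generating_pair S M1 M2 \<longrightarrow> {M1, M2} = {L1, L2}) \<and>
        (\<forall>A a. sym_pos_def A \<and> S = elliptical_cone A a \<longrightarrow>
           L1 \<union> L2 = {x. (x - a) \<bullet> ((A - mat 1) *v (x - a)) = 0})" using part1 part2 by blast
    qed
    have P3: "orthogonal_lines L1 L2 \<longleftrightarrow>
          (is_elliptical_cone S \<and> (\<forall>A a. sym_pos_def A \<and> S = elliptical_cone A a \<longrightarrow> A = mat 1))"
    proof
      assume "orthogonal_lines L1 L2"
      hence "Am d e = mat 1" using orth Am_I_iff[OF D] by simp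
      thus "is_elliptical_cone S \<and> (\<forall>A a. sym_pos_def A \<and> S = elliptical_cone A a \<longrightarrow> A = mat 1)"
        using ell uniq by blast
    next
      assume "is_elliptical_cone S \<and> (\<forall>A a. sym_pos_def A \<and> S = elliptical_cone A a \<longrightarrow> A = mat 1)"
      hence "Am d e = mat 1" using spdA S by blast
      thus "orthogonal_lines L1 L2" using orth Am_I_iff[OF D] by simp
    qed
    have P4: "is_unit_cone S \<longrightarrow>
          (\<exists>p. (\<forall>M1 M2. generating_pair S M1 M2 \<longrightarrow> p \<in> M1 \<inter> M2) \<and>
               (\<forall>M1 M2. is_line M1 \<and> is_line M2 \<and> orthogonal_lines M1 M2 \<and> p \<in> M1 \<inter> M2
                   \<longrightarrow> generating_pair S M1 M2))"
    proof
      assume "is_unit_cone S"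
      hence AI: "Am d e = mat 1" using unit_iff Am_I_iff[OF D] by simp
      have "\<forall>M1 M2. generating_pair S M1 M2 \<longrightarrow> c \<in> M1 \<inter> M2"
        using other line_mem by blast
      moreover have "\<forall>M1 M2. is_line M1 \<and> is_line M2 \<and> orthogonal_lines M1 M2 \<and> c \<in> M1 \<inter> M2
                   \<longrightarrow> generating_pair S M1 M2"
      proof (intro allI impI)
        fix M1 M2 assume H: "is_line M1 \<and> is_line M2 \<and> orthogonal_lines M1 M2 \<and> c \<in> M1 \<inter> M2"
        then obtain p1 d1 q1 e1 where d1: "d1 \<noteq> 0" and e1: "e1 \<noteq> 0" and M1: "M1 = line_through p1 d1"
          and M2: "M2 = line_through q1 e1" and o: "d1 \<bullet> e1 = 0" unfolding orthogonal_lines_def by blast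
        have M1c: "M1 = line_through c d1" using H M1 line_shift by blast
        have M2c: "M2 = line_through c e1" using H M2 line_shift by blast
        have D1: "cross2 d1 e1 \<noteq> 0" using perp_cross[OF o] d1 e1 by blast
        have "generated_set M1 M2 = S"
          using gen_nonpar[OF D1, of c] M1c M2c Am_I_iff[OF D1] o AI S by simp
        moreover have "M1 \<noteq> M2"
        proof
          assume "M1 = M2"
          then obtain k where k: "e1 = k *\<^sub>R d1" using line_dir[of c d1 c e1] M1c M2c by auto
          hence "k * (d1 \<bullet> d1) = 0" using o by simp
          thus False using k d1 e1 by simp
        qed
        ultimately show "generating_pair S M1 M2" using H unfolding generating_pair_def by blast
      qed
      ultimately show "\<exists>p. (\<forall>M1 M2. generating_pair S M1 M2 \<longrightarrow> p \<in> M1 \<inter> M2) \<and>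
               (\<forall>M1 M2. is_line M1 \<and> is_line M2 \<and> orthogonal_lines M1 M2 \<and> p \<in> M1 \<inter> M2
                   \<longrightarrow> generating_pair S M1 M2)" by blast
    qed
    show ?thesis using P1 P3 P4 unit_iff orth by blast
  qed
qed

end
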